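(* Let $X$ and $Y$ be unit Fréchet random variables (distribution function $e^{-1/x}$, $x>0$) such that $\lambda:=\lim_{u\to\infty}\mathbb{P}(X>u\mid Y>u)=0$, and let $(X_i,Y_i)$, $i\ge1$, be i.i.d. copies of $(X,Y)$. Then, as $n\to\infty$, $q_n\to0$ almost surely and, for any fixed threshold $u>0$, $q_{u,n}\to0$ almost surely, where $$q_n=\frac{\max_{i\le n}\{Y_i/X_i\}+\max_{i\le n}\{X_i/Y_i\}-2}{\max_{i\le n}\{Y_i/X_i\}\max_{i\le n}\{X_i/Y_i\}-1},\qquad q_{u,n}=\frac{\max_{i\le n}\{(u+W_i)/(u+V_i)\}+\max_{i\le n}\{(u+V_i)/(u+W_i)\}-2}{\max_{i\le n}\{(u+W_i)/(u+V_i)\}\max_{i\le n}\{(u+V_i)/(u+W_i)\}-1},$$ with $W_i=(X_i-u)I_{\{X_i>u\}}$ and $V_i=(Y_i-u)I_{\{Y_i>u\}}$.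
   Context: The quantity $\lambda$ is the tail dependence index of $(X,Y)$; $X$ and $Y$ are called tail independent if $\lambda=0$. $q_n$ is the quotient correlation and $q_{u,n}$ the tail quotient correlation at threshold $u$; $W_i,V_i$ are the exceedances over $u$. *)

theory Defs
  imports "HOL-Probability.Probability"
begin

definition frechet_cdf :: "real \<Rightarrow> real" where
  "frechet_cdf x = (if x > 0 then exp (- 1 / x) else 0)"

definition quot_corr :: "(nat \<Rightarrow> real) \<Rightarrow> (nat \<Rightarrow> real) \<Rightarrow> nat \<Rightarrow> real" where
  "quot_corr x y n =
     (let a = Max ((\<lambda>i. y i / x i) ` {1..n});
          b = Max ((\<lambda>i. x i / y i) ` {1..n})
      in (a + b - 2) / (a * b - 1))"

definition exceed :: "real \<Rightarrow> real \<Rightarrow> real" where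
  "exceed u x = (if x > u then x - u else 0)"

definition tail_quot_corr :: "real \<Rightarrow> (nat \<Rightarrow> real) \<Rightarrow> (nat \<Rightarrow> real) \<Rightarrow> nat \<Rightarrow> real" where
  "tail_quot_corr u x y n =
     quot_corr (\<lambda>i. u + exceed u (y i)) (\<lambda>i. u + exceed u (x i)) n"

end

theory Submission imports Defs begin
lemma qc_bound:
  fixes a b K :: real
  assumes "a \<ge> K" "b \<ge> K" "K \<ge> 2"
  shows "\<bar>(a + b - 2) / (a * b - 1)\<bar> \<le> 4 / K"
proof -
  have a2: "a \<ge> 2" "b \<ge> 2" using assms by auto
  have ab: "a*b \<ge> 4" using mult_mono[OF a2(1) a2(2)] a2 by simp
  have pos: "a*b - 1 \<ge> a*b/2" using ab by simp
  have num: "a + b - 2 \<ge> 0" using a2 by simp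
  have "(a + b - 2) / (a * b - 1) \<le> (a+b) / (a*b/2)"
    using num pos ab by (intro frac_le) auto
  also have "\<dots> = 2/b + 2/a" using a2 by (simp add: field_simps)
  also have "\<dots> \<le> 2/K + 2/K" using assms by (intro add_mono divide_left_mono) auto
  finally have "(a + b - 2) / (a * b - 1) \<le> 4/K" by simp
  moreover have "(a + b - 2) / (a * b - 1) \<ge> 0" using num ab by simp
  ultimately show ?thesis by (simp only: abs_of_nonneg)
qed

lemma qc_tendsto:
  fixes x y :: "nat \<Rightarrow> real"
  assumes A: "\<And>K. \<exists>i\<ge>1. y i / x i > K" and B: "\<And>K. \<exists>i\<ge>1. x i / y i > K"
  shows "quot_corr x y \<longlonglongrightarrow> 0"
proof (rule LIMSEQ_I)
  fix r :: real assume r: "r > 0"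
  define K where "K = max 2 (4 / r + 1)"
  obtain i where i: "i \<ge> 1" "y i / x i > K" using A by blast
  obtain j where j: "j \<ge> 1" "x j / y j > K" using B by blast
  show "\<exists>no. \<forall>n\<ge>no. norm (quot_corr x y n - 0) < r"
  proof (intro exI allI impI)
    fix n assume n: "max i j \<le> n"
    define a where "a = Max ((\<lambda>i. y i / x i) ` {1..n})"
    define b where "b = Max ((\<lambda>i. x i / y i) ` {1..n})"
    have "a \<ge> y i / x i" unfolding a_def using i n by (intro Max_ge) auto
    hence a: "a \<ge> K" using i by simp
    have "b \<ge> x j / y j" unfolding b_def using j n by (intro Max_ge) auto
    hence b: "b \<ge> K" using j by simp
    have "\<bar>(a + b - 2) / (a * b - 1)\<bar> \<le> 4 / K" using qc_bound[OF a b] K_def by simp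
    also have "4 / K < r"
    proof -
      have "K > 4 / r" unfolding K_def by simp
      hence "K * r > 4" using r by (simp add: field_simps)
      thus ?thesis using r K_def by (simp add: field_simps)
    qed
    finally show "norm (quot_corr x y n - 0) < r"
      unfolding quot_corr_def Let_def a_def[symmetric] b_def[symmetric] by simp
  qed
qed

lemma exp_bounds1: "x > 0 \<Longrightarrow> 1 - exp (- x) \<ge> 1 / (1/x + 1)" for x :: real
proof -
  assume x: "x > 0"
  have "exp x \<ge> 1 + x" by (rule exp_ge_add_one_self)
  hence "exp (-x) \<le> 1 / (1 + x)" using x by (simp add: exp_minus field_simps)
  also have "1 / (1+x) = 1 - 1/(1/x+1)" using x by (simp add: field_simps)
  finally show ?thesis by simp
qed

lemma exp_bounds2: "1 - exp (- x) \<le> x" for x :: real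
  using exp_ge_add_one_self[of "-x"] by simp

lemma tail_pos:
  assumes P: "prob_space M"
    and Am: "A \<in> borel_measurable M" and Bm: "B \<in> borel_measurable M"
    and FA: "\<And>x. measure M {\<omega> \<in> space M. A \<omega> \<le> x} = frechet_cdf x"
    and FB: "\<And>x. measure M {\<omega> \<in> space M. B \<omega> \<le> x} = frechet_cdf x"
    and T: "((\<lambda>t. measure M {\<omega> \<in> space M. A \<omega> > t \<and> B \<omega> > t} / (1 - frechet_cdf t)) \<longlongrightarrow> 0) at_top"
    and c: "c \<ge> 1" and u: "u \<ge> 0"
  shows "measure M {\<omega> \<in> space M. 0 < B \<omega> \<and> c * max (B \<omega>) u < A \<omega>} > 0"
proof (rule ccontr)
  interpret prob_space M by fact
  let ?N = "{\<omega> \<in> space M. 0 < B \<omega> \<and> c * max (B \<omega>) u < A \<omega>}"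
  assume "\<not> ?thesis"
  hence N0: "measure M ?N = 0" using measure_nonneg[of M ?N] by linarith
  have gt: "measure M {\<omega> \<in> space M. s < A \<omega>} = 1 - frechet_cdf s" for s
  proof -
    have "{\<omega> \<in> space M. s < A \<omega>} = space M - {\<omega> \<in> space M. A \<omega> \<le> s}" by auto
    moreover have "{\<omega> \<in> space M. A \<omega> \<le> s} \<in> events" using Am by measurable
    ultimately show ?thesis using prob_compl FA by simp
  qed
  have B0: "measure M {\<omega> \<in> space M. B \<omega> \<le> 0} = 0" using FB[of 0] by (simp add: frechet_cdf_def)
  have ev: "eventually (\<lambda>t. measure M {\<omega> \<in> space M. A \<omega> > t \<and> B \<omega> > t} / (1 - frechet_cdf t) < 1 / (2*c)) at_top"
    using T c by (intro order_tendstoD) auto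
  then obtain t0 where t0: "\<And>t. t \<ge> t0 \<Longrightarrow> measure M {\<omega> \<in> space M. A \<omega> > t \<and> B \<omega> > t} / (1 - frechet_cdf t) < 1 / (2*c)"
    by (auto simp: eventually_at_top_linorder)
  define t where "t = max t0 (max u 1)"
  have t: "t \<ge> t0" "t \<ge> u" "t \<ge> 1" unfolding t_def by auto
  have sub: "{\<omega> \<in> space M. c*t < A \<omega>} \<subseteq> {\<omega> \<in> space M. A \<omega> > t \<and> B \<omega> > t} \<union> (?N \<union> {\<omega> \<in> space M. B \<omega> \<le> 0})"
  proof
    fix \<omega> assume w: "\<omega> \<in> {\<omega> \<in> space M. c*t < A \<omega>}"
    have ct: "c*t \<ge> t" using c t by (simp add: mult_right_mono[of 1 c t, simplified])
    show "\<omega> \<in> {\<omega> \<in> space M. A \<omega> > t \<and> B \<omega> > t} \<union> (?N \<union> {\<omega> \<in> space M. B \<omega> \<le> 0})"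
    proof (cases "\<omega> \<in> ?N \<or> B \<omega> \<le> 0")
      case True thus ?thesis using w by auto
    next
      case False
      hence "c * max (B \<omega>) u \<ge> A \<omega>" using w by auto
      hence "c * max (B \<omega>) u > c * t" using w by auto
      hence "max (B \<omega>) u > t" using c by (simp add: mult_less_cancel_left)
      hence "B \<omega> > t" using t by auto
      thus ?thesis using w ct by auto
    qed
  qed
  have m1: "{\<omega> \<in> space M. A \<omega> > t \<and> B \<omega> > t} \<in> events" using Am Bm by measurable
  have m2: "?N \<in> events" using Am Bm by measurable
  have m3: "{\<omega> \<in> space M. B \<omega> \<le> 0} \<in> events" using Bm by measurable
  have "measure M {\<omega> \<in> space M. c*t < A \<omega>} \<le> measure M ({\<omega> \<in> space M. A \<omega> > t \<and> B \<omega> > t} \<union> (?N \<union> {\<omega> \<in> space M. B \<omega> \<le> 0}))"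
    using sub m1 m2 m3 by (intro finite_measure_mono) auto
  also have "\<dots> \<le> measure M {\<omega> \<in> space M. A \<omega> > t \<and> B \<omega> > t} + (measure M ?N + measure M {\<omega> \<in> space M. B \<omega> \<le> 0})"
    using m1 m2 m3 by (intro order.trans[OF measure_subadditive] add_left_mono measure_subadditive) auto
  finally have le: "1 - frechet_cdf (c*t) \<le> measure M {\<omega> \<in> space M. A \<omega> > t \<and> B \<omega> > t}"
    using gt N0 B0 by simp
  have ctpos: "c*t > 0" using c t by simp
  have lo: "1 - frechet_cdf (c*t) \<ge> 1 / (c*t + 1)"
    using exp_bounds1[of "1/(c*t)"] ctpos by (simp add: frechet_cdf_def)
  have D: "1 - frechet_cdf t \<le> 1/t" "1 - frechet_cdf t > 0"
    using exp_bounds2[of "1/t"] t by (auto simp: frechet_cdf_def)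
  define m where "m = measure M {\<omega> \<in> space M. A \<omega> > t \<and> B \<omega> > t}"
  have mge: "m \<ge> 1 / (c*t+1)" using le lo m_def by simp
  have "m / (1 - frechet_cdf t) \<ge> m / (1/t)"
    using D mge ctpos t by (intro divide_left_mono) (auto intro: order.trans[rotated])
  also have "m / (1/t) = m * t" by simp
  also have "m * t \<ge> t / (c*t+1)" using mge t by (simp add: divide_simps mult_right_mono)
  also have "t / (c*t+1) \<ge> 1/(2*c)"
  proof -
    have "c*t \<ge> 1" using mult_mono[of 1 c 1 t] c t by simp
    hence "c*t + 1 \<le> 2*c*t" by simp
    thus ?thesis using c t ctpos by (simp add: divide_simps)
  qed
  finally have "m / (1 - frechet_cdf t) \<ge> 1/(2*c)" by simp
  with t0[OF t(1)] show False unfolding m_def by simp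
qed

lemma exists_hit:
  fixes M :: "'a measure" and X Y :: "'a \<Rightarrow> real" and Xs Ys :: "nat \<Rightarrow> 'a \<Rightarrow> real"
    and S :: "(real \<times> real) set"
  assumes P: "prob_space M"
    and "X \<in> borel_measurable M" and "Y \<in> borel_measurable M"
    and Xm: "\<And>i. Xs i \<in> borel_measurable M" and Ym: "\<And>i. Ys i \<in> borel_measurable M"
    and I: "prob_space.indep_vars M (\<lambda>_. borel) (\<lambda>i \<omega>. (Xs i \<omega>, Ys i \<omega>)) {1..}"
    and D: "\<And>i. i \<ge> 1 \<Longrightarrow> distr M borel (\<lambda>\<omega>. (Xs i \<omega>, Ys i \<omega>)) = distr M borel (\<lambda>\<omega>. (X \<omega>, Y \<omega>))"
    and S: "S \<in> sets borel"
    and p: "measure M {\<omega> \<in> space M. (X \<omega>, Y \<omega>) \<in> S} > 0"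
  shows "AE \<omega> in M. \<exists>i\<ge>1. (Xs i \<omega>, Ys i \<omega>) \<in> S"
proof -
  interpret prob_space M by fact
  define Z where "Z = (\<lambda>i \<omega>. (Xs i \<omega>, Ys i \<omega>))"
  define Z0 where "Z0 = (\<lambda>\<omega>. (X \<omega>, Y \<omega>))"
  have Zm: "Z i \<in> borel_measurable M" for i unfolding Z_def using Xm Ym by measurable
  have Z0m: "Z0 \<in> borel_measurable M" unfolding Z0_def using assms by measurable
  define p where "p = measure M {\<omega> \<in> space M. (X \<omega>, Y \<omega>) \<in> S}"
  have p1: "p \<le> 1" unfolding p_def by simp
  have Sc: "- S \<in> sets borel" using S by (metis Compl_eq_Diff_UNIV sets.compl_sets space_borel)
  have q: "prob (Z i -` (- S) \<inter> space M) = 1 - p" if "i \<ge> 1" for i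
  proof -
    have "prob (Z i -` (- S) \<inter> space M) = measure (distr M borel (Z i)) (- S)"
      using Zm Sc by (simp add: measure_distr)
    also have "\<dots> = measure (distr M borel Z0) (- S)" using D[OF that] unfolding Z_def Z0_def by simp
    also have "\<dots> = prob (Z0 -` (- S) \<inter> space M)" using Z0m Sc by (simp add: measure_distr)
    also have "Z0 -` (- S) \<inter> space M = space M - {\<omega> \<in> space M. (X \<omega>, Y \<omega>) \<in> S}"
      unfolding Z0_def by auto
    also have "prob \<dots> = 1 - p" unfolding p_def
      using Z0m S by (intro prob_compl) (auto simp: Z0_def measurable_sets[of Z0 M borel S, unfolded vimage_def])
    finally show ?thesis .
  qed
  have F: "indep_sets (\<lambda>i. {Z i -` A \<inter> space M | A. A \<in> sets borel}) {1..}"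
    using I unfolding indep_vars_def2 Z_def by auto
  define E where "E = {\<omega> \<in> space M. \<forall>i\<ge>1. Z i \<omega> \<notin> S}"
  have Eev: "E \<in> events"
  proof -
    have "E = space M \<inter> (\<Inter>i\<in>{1..}. Z i -` (- S) \<inter> space M)" unfolding E_def by auto
    also have "\<dots> \<in> events" using Zm Sc by (intro sets.Int sets.countable_INT') (auto intro: measurable_sets)
    finally show ?thesis .
  qed
  have bound: "prob E \<le> (1 - p) ^ n" for n
  proof (cases "n = 0")
    case True thus ?thesis by simp
  next
    case False
    have "E \<subseteq> (\<Inter>j\<in>{1..n}. Z j -` (- S) \<inter> space M)" using False unfolding E_def by auto
    hence "prob E \<le> prob (\<Inter>j\<in>{1..n}. Z j -` (- S) \<inter> space M)"
      using Zm Sc False by (intro finite_measure_mono) (auto intro!: sets.finite_INT measurable_sets)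
    also have "\<dots> = (\<Prod>j\<in>{1..n}. prob (Z j -` (- S) \<inter> space M))"
      using False Sc by (intro indep_setsD[OF F]) auto
    also have "\<dots> = (\<Prod>j\<in>{1..n}. 1 - p)" using q by (intro prod.cong) auto
    also have "\<dots> = (1-p)^n" by simp
    finally show ?thesis .
  qed
  have "(\<lambda>n. (1 - p) ^ n) \<longlonglongrightarrow> 0"
    using p p1 unfolding p_def[symmetric] by (intro LIMSEQ_power_zero) auto
  hence "prob E \<le> 0" using bound by (intro LIMSEQ_le_const) auto
  hence "prob E = 0" using measure_nonneg[of M E] by linarith
  hence "E \<in> null_sets M" using Eev by (simp add: emeasure_eq_measure null_sets_def)
  thus ?thesis by (rule AE_I') (auto simp: E_def Z_def)
qed

lemma ratio1:
  fixes a b c :: real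
  assumes "0 < b" "c * max b 0 < a" "c \<ge> 1"
  shows "a / b > c"
  using assms by (simp add: pos_less_divide_eq max_def)

lemma ratio2:
  fixes a b c u :: real
  assumes "0 < b" "c * max b u < a" "c \<ge> 1" "u > 0"
  shows "(u + exceed u a) / (u + exceed u b) > c"
proof -
  have "c * u \<le> c * max b u" using assms by (intro mult_left_mono) auto
  moreover have "u \<le> c * u" using assms mult_right_mono[of 1 c u] by simp
  ultimately have "a > u" using assms by linarith
  hence ea: "u + exceed u a = a" by (simp add: exceed_def)
  have eb: "u + exceed u b = max b u" by (simp add: exceed_def max_def)
  have "max b u > 0" using assms by simp
  thus ?thesis using ea eb assms by (simp add: pos_less_divide_eq)
qed

lemma nat_above: "\<exists>k::nat. real k + 1 > K"
proof -
  obtain n :: nat where "K < real n" using reals_Archimedean2 by blast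
  thus ?thesis by (intro exI[of _ n]) simp
qed

theorem theorem5p1:
  fixes M :: "'a measure" and X Y :: "'a \<Rightarrow> real" and Xs Ys :: "nat \<Rightarrow> 'a \<Rightarrow> real"
  assumes "prob_space M"
    and "X \<in> borel_measurable M" and "Y \<in> borel_measurable M"
    and "\<And>i. Xs i \<in> borel_measurable M" and "\<And>i. Ys i \<in> borel_measurable M"
    and "\<And>x. measure M {\<omega> \<in> space M. X \<omega> \<le> x} = frechet_cdf x"
    and "\<And>x. measure M {\<omega> \<in> space M. Y \<omega> \<le> x} = frechet_cdf x"
    and "((\<lambda>u. measure M {\<omega> \<in> space M. X \<omega> > u \<and> Y \<omega> > u}
                / measure M {\<omega> \<in> space M. Y \<omega> > u}) \<longlongrightarrow> 0) at_top"
    and "prob_space.indep_vars M (\<lambda>_. borel) (\<lambda>i \<omega>. (Xs i \<omega>, Ys i \<omega>)) {1..}"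
    and "\<And>i. i \<ge> 1 \<Longrightarrow> distr M borel (\<lambda>\<omega>. (Xs i \<omega>, Ys i \<omega>)) = distr M borel (\<lambda>\<omega>. (X \<omega>, Y \<omega>))"
  shows "(AE \<omega> in M. (\<lambda>n. quot_corr (\<lambda>i. Xs i \<omega>) (\<lambda>i. Ys i \<omega>) n) \<longlonglongrightarrow> 0)
    \<and> (\<forall>u>0. AE \<omega> in M. (\<lambda>n. tail_quot_corr u (\<lambda>i. Xs i \<omega>) (\<lambda>i. Ys i \<omega>) n) \<longlonglongrightarrow> 0)"
proof -
  interpret prob_space M by fact
  have gtY: "measure M {\<omega> \<in> space M. s < Y \<omega>} = 1 - frechet_cdf s" for s
  proof -
    have "{\<omega> \<in> space M. s < Y \<omega>} = space M - {\<omega> \<in> space M. Y \<omega> \<le> s}" by auto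
    moreover have "{\<omega> \<in> space M. Y \<omega> \<le> s} \<in> events" using assms(3) by measurable
    ultimately show ?thesis using prob_compl assms(7) by simp
  qed
  have T1: "((\<lambda>t. measure M {\<omega> \<in> space M. X \<omega> > t \<and> Y \<omega> > t} / (1 - frechet_cdf t)) \<longlongrightarrow> 0) at_top"
    using assms(8) by (simp add: gtY)
  have T2: "((\<lambda>t. measure M {\<omega> \<in> space M. Y \<omega> > t \<and> X \<omega> > t} / (1 - frechet_cdf t)) \<longlongrightarrow> 0) at_top"
    using T1 by (simp add: conj_commute)
  define G1 where "G1 = (\<lambda>c u. {p :: real \<times> real. 0 < snd p \<and> c * max (snd p) u < fst p})"
  define G2 where "G2 = (\<lambda>c u. {p :: real \<times> real. 0 < fst p \<and> c * max (fst p) u < snd p})"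
  have G1b: "G1 c u \<in> sets borel" for c u
  proof -
    have "Measurable.pred (borel \<Otimes>\<^sub>M borel) (\<lambda>p::real\<times>real. 0 < snd p \<and> c * max (snd p) u < fst p)" by measurable
    thus ?thesis unfolding G1_def pred_def borel_prod by simp
  qed
  have G2b: "G2 c u \<in> sets borel" for c u
  proof -
    have "Measurable.pred (borel \<Otimes>\<^sub>M borel) (\<lambda>p::real\<times>real. 0 < fst p \<and> c * max (fst p) u < snd p)" by measurable
    thus ?thesis unfolding G2_def pred_def borel_prod by simp
  qed
  have hit: "AE \<omega> in M. \<forall>k::nat. (\<exists>i\<ge>1. (Xs i \<omega>, Ys i \<omega>) \<in> G1 (real k + 1) u)
                                \<and> (\<exists>i\<ge>1. (Xs i \<omega>, Ys i \<omega>) \<in> G2 (real k + 1) u)"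
    if u: "u \<ge> 0" for u
  proof (subst AE_all_countable, intro allI AE_conjI)
    fix k :: nat
    have c: "real k + 1 \<ge> 1" by simp
    have p1: "measure M {\<omega> \<in> space M. 0 < Y \<omega> \<and> (real k + 1) * max (Y \<omega>) u < X \<omega>} > 0"
      by (rule tail_pos[OF assms(1,2,3,6,7) T1 c u])
    have p2: "measure M {\<omega> \<in> space M. 0 < X \<omega> \<and> (real k + 1) * max (X \<omega>) u < Y \<omega>} > 0"
      by (rule tail_pos[OF assms(1,3,2,7,6) T2 c u])
    show "AE \<omega> in M. \<exists>i\<ge>1. (Xs i \<omega>, Ys i \<omega>) \<in> G1 (real k + 1) u"
    proof (rule exists_hit[OF assms(1,2,3,4,5,9,10) G1b])
      have "{\<omega> \<in> space M. (X \<omega>, Y \<omega>) \<in> G1 (real k + 1) u} = {\<omega> \<in> space M. 0 < Y \<omega> \<and> (real k + 1) * max (Y \<omega>) u < X \<omega>}"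
        unfolding G1_def by auto
      thus "measure M {\<omega> \<in> space M. (X \<omega>, Y \<omega>) \<in> G1 (real k + 1) u} > 0" using p1 by simp
    qed
    show "AE \<omega> in M. \<exists>i\<ge>1. (Xs i \<omega>, Ys i \<omega>) \<in> G2 (real k + 1) u"
    proof (rule exists_hit[OF assms(1,2,3,4,5,9,10) G2b])
      have "{\<omega> \<in> space M. (X \<omega>, Y \<omega>) \<in> G2 (real k + 1) u} = {\<omega> \<in> space M. 0 < X \<omega> \<and> (real k + 1) * max (X \<omega>) u < Y \<omega>}"
        unfolding G2_def by auto
      thus "measure M {\<omega> \<in> space M. (X \<omega>, Y \<omega>) \<in> G2 (real k + 1) u} > 0" using p2 by simp
    qed
  qed
  have part1: "AE \<omega> in M. (\<lambda>n. quot_corr (\<lambda>i. Xs i \<omega>) (\<lambda>i. Ys i \<omega>) n) \<longlonglongrightarrow> 0"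
    using hit[of 0, OF order_refl]
  proof eventually_elim
    case (elim \<omega>)
    show ?case
    proof (rule qc_tendsto)
      fix K :: real
      obtain k :: nat where k: "real k + 1 > K" using nat_above by blast
      obtain i where i: "i \<ge> 1" "(Xs i \<omega>, Ys i \<omega>) \<in> G2 (real k + 1) 0" using elim by blast
      have "Ys i \<omega> / Xs i \<omega> > real k + 1" using i by (intro ratio1) (auto simp: G2_def)
      thus "\<exists>i\<ge>1. Ys i \<omega> / Xs i \<omega> > K" using i k by (intro exI[of _ i]) auto
    next
      fix K :: real
      obtain k :: nat where k: "real k + 1 > K" using nat_above by blast
      obtain i where i: "i \<ge> 1" "(Xs i \<omega>, Ys i \<omega>) \<in> G1 (real k + 1) 0" using elim by blast
      have "Xs i \<omega> / Ys i \<omega> > real k + 1" using i by (intro ratio1) (auto simp: G1_def)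
      thus "\<exists>i\<ge>1. Xs i \<omega> / Ys i \<omega> > K" using i k by (intro exI[of _ i]) auto
    qed
  qed
  have part2: "AE \<omega> in M. (\<lambda>n. tail_quot_corr u (\<lambda>i. Xs i \<omega>) (\<lambda>i. Ys i \<omega>) n) \<longlonglongrightarrow> 0"
    if u: "u > 0" for u
    using hit[OF less_imp_le[OF u]]
  proof eventually_elim
    case (elim \<omega>)
    show ?case unfolding tail_quot_corr_def
    proof (rule qc_tendsto)
      fix K :: real
      obtain k :: nat where k: "real k + 1 > K" using nat_above by blast
      obtain i where i: "i \<ge> 1" "(Xs i \<omega>, Ys i \<omega>) \<in> G1 (real k + 1) u" using elim by blast
      have "(u + exceed u (Xs i \<omega>)) / (u + exceed u (Ys i \<omega>)) > real k + 1"
        using i u by (intro ratio2) (auto simp: G1_def)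
      thus "\<exists>i\<ge>1. (u + exceed u (Xs i \<omega>)) / (u + exceed u (Ys i \<omega>)) > K"
        using i k by (intro exI[of _ i]) auto
    next
      fix K :: real
      obtain k :: nat where k: "real k + 1 > K" using nat_above by blast
      obtain i where i: "i \<ge> 1" "(Xs i \<omega>, Ys i \<omega>) \<in> G2 (real k + 1) u" using elim by blast
      have "(u + exceed u (Ys i \<omega>)) / (u + exceed u (Xs i \<omega>)) > real k + 1"
        using i u by (intro ratio2) (auto simp: G2_def)
      thus "\<exists>i\<ge>1. (u + exceed u (Ys i \<omega>)) / (u + exceed u (Xs i \<omega>)) > K"
        using i k by (intro exI[of _ i]) auto
    qed
  qed
  show ?thesis using part1 part2 by blast
qed

end
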